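(* Let $k\in\mathbb Z_{>0}$. For $0\le l\le k$ and $N\ge1$, $$d^{(N+1)}_{k,l}(0)=\sum_{l'=0}^k\mathcal D^{l'}_l\,d^{(N)}_{k,l'}(0),\qquad d^{(1)}_{k,l}(0)=l+1,$$ where $\mathcal D^{l'}_l=(\min(l,k-l')+1)\cdot(\min(l',k-l)+1)$.
   Context: The level $k$ Verlinde algebra $\mathcal V_k$ has basis $\pi_0,\dots,\pi_k$ and product $\pi_l\pi_{l'}=\sum_i\pi_i$, the sum over $|l-l'|\le i\le\min(2k-l-l',l+l')$ with $i+l-l'$ even. The integers $d^{(N)}_{k,l}(0)$ are defined by $(\pi_0+2\pi_1+\cdots+(k+1)\pi_k)^N=\sum_{l=0}^kd^{(N)}_{k,l}(0)\pi_l$. *)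

theory Defs
  imports Main
begin

text \<open>Elements of the level k Verlinde algebra V_k are represented by their
coefficient functions nat => int on the basis pi_0, ..., pi_k
(coefficients at indices > k are ignored / zero).\<close>

text \<open>Structure constant: coefficient of pi_i in pi_l * pi_l'.\<close>
definition verlinde_coeff :: "nat \<Rightarrow> nat \<Rightarrow> nat \<Rightarrow> nat \<Rightarrow> int" where
  "verlinde_coeff k l l' i =
     (if \<bar>int l - int l'\<bar> \<le> int i
         \<and> int i \<le> min (2 * int k - int l - int l') (int l + int l')
         \<and> even (int i + int l - int l') then 1 else 0)"

definition verlinde_mult :: "nat \<Rightarrow> (nat \<Rightarrow> int) \<Rightarrow> (nat \<Rightarrow> int) \<Rightarrow> nat \<Rightarrow> int" where
  "verlinde_mult k a b = (\<lambda>i. if i \<le> k then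
       (\<Sum>l\<le>k. \<Sum>l'\<le>k. a l * b l' * verlinde_coeff k l l' i) else 0)"

definition verlinde_one :: "nat \<Rightarrow> nat \<Rightarrow> int" where
  "verlinde_one k = (\<lambda>i. if i = 0 then 1 else 0)"

primrec verlinde_pow :: "nat \<Rightarrow> (nat \<Rightarrow> int) \<Rightarrow> nat \<Rightarrow> nat \<Rightarrow> int" where
  "verlinde_pow k a 0 = verlinde_one k"
| "verlinde_pow k a (Suc n) = verlinde_mult k a (verlinde_pow k a n)"

definition verlinde_gen :: "nat \<Rightarrow> nat \<Rightarrow> int" where
  "verlinde_gen k = (\<lambda>l. if l \<le> k then int l + 1 else 0)"

definition dcoef :: "nat \<Rightarrow> nat \<Rightarrow> nat \<Rightarrow> int" where
  "dcoef N k l = verlinde_pow k (verlinde_gen k) N l"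

definition Dmat :: "nat \<Rightarrow> nat \<Rightarrow> nat \<Rightarrow> int" where
  "Dmat k l' l = int (min l (k - l') + 1) * int (min l' (k - l) + 1)"

end

theory Submission imports Defs begin

lemma sum_odd: "(\<Sum>j\<le>m. int d + 2 * int j + 1) = int (m+1) * int (d+m+1)"
  by (induction m) (auto simp: algebra_simps)

lemma coeff_iff:
  "verlinde_coeff k a b l = 1 \<longleftrightarrow>
    (\<bar>int a - int b\<bar> \<le> int l \<and> int l \<le> 2 * int k - int a - int b \<and> int l \<le> int a + int b
     \<and> even (int l + int a - int b))"
  by (simp add: verlinde_coeff_def)

lemma setchar:
  fixes k b l :: nat
  assumes "b \<le> k" "l \<le> k"
  defines "d \<equiv> (if b \<le> l then l - b else b - l)"
  defines "m \<equiv> min (min b l) (k - max b l)"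
  shows "{a. a \<le> k \<and> verlinde_coeff k a b l = 1} = (\<lambda>j. d + 2*j) ` {..m}"
proof (rule set_eqI, rule iffI)
  fix a assume "a \<in> {a. a \<le> k \<and> verlinde_coeff k a b l = 1}"
  hence h: "a \<le> k" "\<bar>int a - int b\<bar> \<le> int l" "int l \<le> 2 * int k - int a - int b" "int l \<le> int a + int b"
     "even (int l + int a - int b)"
    by (auto simp: coeff_iff)
  have ad: "d \<le> a" using h(2) h(4) unfolding d_def by (auto simp: abs_if split: if_splits)
  have "int a - int d = (int l + int a - int b) - (if b \<le> l then 2 * (int l - int b) else 0)"
    unfolding d_def by (cases "b \<le> l") auto
  hence "even (int a - int d)" using h(5) by (cases "b \<le> l") (simp_all, presburger+)
  then obtain j where j: "int a - int d = 2 * j" by (meson evenE)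
  have "j \<ge> 0" using j ad by simp
  then obtain jn where jn: "j = int jn" using nonneg_int_cases by blast
  have "a = d + 2*jn" using j jn ad by linarith
  moreover have "jn \<le> m" using h j jn ad unfolding d_def m_def by (cases "b \<le> l") auto
  ultimately show "a \<in> (\<lambda>j. d + 2*j) ` {..m}" by auto
next
  fix a assume "a \<in> (\<lambda>j. d + 2*j) ` {..m}"
  then obtain j where j: "j \<le> m" "a = d + 2*j" by auto
  have e: "even (int l + int a - int b)"
  proof -
    have "int l + int a - int b = (if b \<le> l then 2 * (int l - int b) else 0) + 2 * int j"
      using j unfolding d_def by (cases "b \<le> l") auto
    thus ?thesis by simp
  qed
  show "a \<in> {a. a \<le> k \<and> verlinde_coeff k a b l = 1}" using assms j e
    unfolding coeff_iff d_def m_def by (cases "b \<le> l") auto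
qed

lemma coeff01: "verlinde_coeff k a b l = (if verlinde_coeff k a b l = 1 then 1 else 0)"
  by (simp add: verlinde_coeff_def)

lemma Dsum:
  fixes k b l :: nat
  assumes "b \<le> k" "l \<le> k"
  shows "(\<Sum>a\<le>k. (int a + 1) * verlinde_coeff k a b l) = Dmat k b l"
proof -
  define d where "d = (if b \<le> l then l - b else b - l)"
  define m where "m = min (min b l) (k - max b l)"
  have "(\<Sum>a\<le>k. (int a + 1) * verlinde_coeff k a b l)
      = (\<Sum>a\<le>k. if verlinde_coeff k a b l = 1 then int a + 1 else 0)"
    by (rule sum.cong[OF refl]) (subst coeff01, simp)
  also have "\<dots> = (\<Sum>a\<in>{a. a \<le> k \<and> verlinde_coeff k a b l = 1}. int a + 1)"
    by (simp add: sum.inter_filter[symmetric] Int_def atMost_def conj_commute)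
  also have "\<dots> = (\<Sum>a\<in>(\<lambda>j. d + 2*j) ` {..m}. int a + 1)"
    using setchar[OF assms] unfolding d_def m_def by simp
  also have "\<dots> = (\<Sum>j\<le>m. int d + 2 * int j + 1)"
    by (subst sum.reindex) (auto simp: inj_on_def)
  also have "\<dots> = int (m+1) * int (d+m+1)" by (rule sum_odd)
  also have "\<dots> = Dmat k b l"
    unfolding Dmat_def d_def m_def using assms by (cases "b \<le> l") (auto simp: min_def)
  finally show ?thesis .
qed

lemma mult_gen:
  assumes "l \<le> k"
  shows "verlinde_mult k (verlinde_gen k) P l = (\<Sum>b\<le>k. Dmat k b l * P b)"
proof -
  have "verlinde_mult k (verlinde_gen k) P l
      = (\<Sum>a\<le>k. \<Sum>b\<le>k. P b * ((int a + 1) * verlinde_coeff k a b l))"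
    using assms unfolding verlinde_mult_def verlinde_gen_def
    by (auto intro!: sum.cong simp: algebra_simps)
  also have "\<dots> = (\<Sum>b\<le>k. P b * (\<Sum>a\<le>k. (int a + 1) * verlinde_coeff k a b l))"
    by (subst sum.swap) (simp add: sum_distrib_left)
  also have "\<dots> = (\<Sum>b\<le>k. Dmat k b l * P b)"
    using assms by (auto intro!: sum.cong simp: Dsum)
  finally show ?thesis .
qed

theorem lemma3p2p1:
  fixes k l N :: nat
  assumes "k > 0" and "l \<le> k" and "N \<ge> 1"
  shows "dcoef (N + 1) k l = (\<Sum>l'\<le>k. Dmat k l' l * dcoef N k l')
         \<and> dcoef 1 k l = int l + 1"
proof
  show "dcoef (N + 1) k l = (\<Sum>l'\<le>k. Dmat k l' l * dcoef N k l')"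
    unfolding dcoef_def using mult_gen[OF assms(2)] by simp
  have "dcoef 1 k l = (\<Sum>b\<le>k. Dmat k b l * verlinde_one k b)"
    unfolding dcoef_def using mult_gen[OF assms(2)] by simp
  also have "\<dots> = Dmat k 0 l" by (simp add: verlinde_one_def if_distrib sum.delta cong: if_cong)
  also have "\<dots> = int l + 1" using assms by (simp add: Dmat_def)
  finally show "dcoef 1 k l = int l + 1" .
qed

end
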